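(* Let $d,m,N$ be positive integers, let $0<\Lambda_1<\dots<\Lambda_N$ be real numbers, let $A_1,\dots,A_N\in\mathbb{R}^{d\times d}$, $B\in\mathbb{R}^{d\times m}$, $g\in L^\infty([0,\Lambda_N],\mathbb{R}^{d\times d})$, and let $q\in[1,+\infty)$. Consider the control system $$x(t)=\sum_{j=1}^N A_j x(t-\Lambda_j)+\int_0^{\Lambda_N} g(s)x(t-s)\,ds+Bu(t),\qquad t\ge 0. \quad (\Sigma)$$ Let $T>0$. Then $(\Sigma)$ is $L^q$ approximately controllable from the origin in time $T$ if and only if it is $L^q$ approximately controllable in time $T$.
   Context: For every $T\ge 0$, $\phi\in L^q([-\Lambda_N,0],\mathbb{R}^d)$ and $u\in L^q([0,T],\mathbb{R}^m)$, there is a unique $x\in L^q([-\Lambda_N,T],\mathbb{R}^d)$ with $x(\theta)=\phi(\theta)$ for $\theta\in[-\Lambda_N,0]$ satisfying $(\Sigma)$ for almost every $t\in[0,T]$; this is the solution associated with $(\phi,u)$. For $t\in[0,T]$, $x_t\in L^q([-\Lambda_N,0],\mathbb{R}^d)$ denotes $x_t(\theta)=x(t+\theta)$, and $\|\cdot\|_{[-\Lambda_N,0],q}$ is the $L^q$ norm on $[-\Lambda_N,0]$. $(\Sigma)$ is $L^q$ approximately controllable in time $T>0$ if for every $\phi,\psi\in L^q([-\Lambda_N,0],\mathbb{R}^d)$ and $\epsilon>0$ there exists $u\in L^q([0,T],\mathbb{R}^m)$ such that the associated solution satisfies $\|x_T-\psi\|_{[-\Lambda_N,0],q}<\epsilon$.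 It is $L^q$ approximately controllable from the origin in time $T>0$ if the same holds with $\phi\equiv 0$ fixed (for every $\psi$ and $\epsilon>0$). *)

theory Defs
  imports "HOL-Analysis.Analysis"
begin

definition Lq_on :: "real \<Rightarrow> real \<Rightarrow> real \<Rightarrow> (real \<Rightarrow> 'a::euclidean_space) \<Rightarrow> bool" where
  "Lq_on q a b f \<longleftrightarrow> f \<in> borel_measurable (lebesgue_on {a..b}) \<and>
     integrable (lebesgue_on {a..b}) (\<lambda>t. norm (f t) powr q)"

definition Lq_norm :: "real \<Rightarrow> real \<Rightarrow> real \<Rightarrow> (real \<Rightarrow> 'a::euclidean_space) \<Rightarrow> real" where
  "Lq_norm q a b f = (\<integral>t. norm (f t) powr q \<partial>lebesgue_on {a..b}) powr (1 / q)"

definition Linf_on :: "real \<Rightarrow> real \<Rightarrow> (real \<Rightarrow> 'a::euclidean_space) \<Rightarrow> bool" where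
  "Linf_on a b f \<longleftrightarrow> f \<in> borel_measurable (lebesgue_on {a..b}) \<and>
     (\<exists>C. AE t in lebesgue_on {a..b}. norm (f t) \<le> C)"

definition is_solution ::
  "nat \<Rightarrow> (nat \<Rightarrow> real) \<Rightarrow> (nat \<Rightarrow> real^'d^'d) \<Rightarrow> (real \<Rightarrow> real^'d^'d) \<Rightarrow> real^'m^'d \<Rightarrow> real
   \<Rightarrow> real \<Rightarrow> (real \<Rightarrow> real^'d) \<Rightarrow> (real \<Rightarrow> real^'m) \<Rightarrow> (real \<Rightarrow> real^'d) \<Rightarrow> bool" where
  "is_solution N \<Lambda> A g B q T \<phi> u x \<longleftrightarrow>
     Lq_on q (- \<Lambda> N) T x \<and> (\<forall>\<theta>\<in>{- \<Lambda> N..0}. x \<theta> = \<phi> \<theta>) \<and>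
     (AE t in lebesgue_on {0..T}.
        x t = (\<Sum>j=1..N. A j *v x (t - \<Lambda> j))
              + (\<integral>s. g s *v x (t - s) \<partial>lebesgue_on {0..\<Lambda> N})
              + B *v u t)"

definition approx_controllable ::
  "nat \<Rightarrow> (nat \<Rightarrow> real) \<Rightarrow> (nat \<Rightarrow> real^'d^'d) \<Rightarrow> (real \<Rightarrow> real^'d^'d) \<Rightarrow> real^'m^'d \<Rightarrow> real
   \<Rightarrow> real \<Rightarrow> bool" where
  "approx_controllable N \<Lambda> A g B q T \<longleftrightarrow>
     (\<forall>\<phi> \<psi> \<epsilon>. Lq_on q (- \<Lambda> N) 0 \<phi> \<longrightarrow> Lq_on q (- \<Lambda> N) 0 \<psi> \<longrightarrow> \<epsilon> > 0 \<longrightarrow>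
        (\<exists>u x. Lq_on q 0 T (u :: real \<Rightarrow> real^'m) \<and> is_solution N \<Lambda> A g B q T \<phi> u x \<and>
               Lq_norm q (- \<Lambda> N) 0 (\<lambda>\<theta>. x (T + \<theta>) - \<psi> \<theta>) < \<epsilon>))"

definition approx_controllable_from_origin ::
  "nat \<Rightarrow> (nat \<Rightarrow> real) \<Rightarrow> (nat \<Rightarrow> real^'d^'d) \<Rightarrow> (real \<Rightarrow> real^'d^'d) \<Rightarrow> real^'m^'d \<Rightarrow> real
   \<Rightarrow> real \<Rightarrow> bool" where
  "approx_controllable_from_origin N \<Lambda> A g B q T \<longleftrightarrow>
     (\<forall>\<psi> \<epsilon>. Lq_on q (- \<Lambda> N) 0 \<psi> \<longrightarrow> \<epsilon> > 0 \<longrightarrow>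
        (\<exists>u x. Lq_on q 0 T (u :: real \<Rightarrow> real^'m) \<and> is_solution N \<Lambda> A g B q T (\<lambda>_. 0) u x \<and>
               Lq_norm q (- \<Lambda> N) 0 (\<lambda>\<theta>. x (T + \<theta>) - \<psi> \<theta>) < \<epsilon>))"

end

theory Submission
  imports Defs
begin


lemma continuous_mv: "continuous_on UNIV (\<lambda>w::((real^'n^'m) \<times> (real^'n)). fst w *v snd w)"
  unfolding matrix_vector_mult_def
  by (intro continuous_intros)

lemma borel_measurable_mv[measurable (raw)]:
  fixes f :: "'a \<Rightarrow> real^'n^'m" and v :: "'a \<Rightarrow> real^'n"
  assumes "f \<in> borel_measurable M" "v \<in> borel_measurable M"
  shows "(\<lambda>x. f x *v v x) \<in> borel_measurable M"
proof -
  have "(\<lambda>x. (f x, v x)) \<in> borel_measurable M"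
    using assms by (intro borel_measurable_Pair)
  from borel_measurable_continuous_on[OF continuous_mv this] show ?thesis by simp
qed

definition mn :: "real^'n^'m \<Rightarrow> real" where
  "mn M = (\<Sum>i\<in>UNIV. \<Sum>j\<in>UNIV. \<bar>M$i$j\<bar>)"

lemma mn_ge0: "0 \<le> mn M"
  by (simp add: mn_def sum_nonneg)

lemma norm_mv_le: "norm (M *v x) \<le> mn M * norm x"
proof -
  have "norm (M *v x) \<le> onorm ((*v) M) * norm x"
    by (rule onorm) simp
  also have "\<dots> \<le> mn M * norm x"
    using onorm_le_matrix_component_sum[of M] by (simp add: mn_def mult_right_mono)
  finally show ?thesis .
qed

lemma mn_le_norm: "mn (M::real^'n^'m) \<le> real CARD('m) * real CARD('n) * norm M"
proof -
  have "\<bar>M$i$j\<bar> \<le> norm M" for i j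
    using Finite_Cartesian_Product.norm_nth_le[where x="M$i" and i=j] Finite_Cartesian_Product.norm_nth_le[where x=M and i=i] by simp
  then have "mn M \<le> (\<Sum>i\<in>(UNIV::'m set). \<Sum>j\<in>(UNIV::'n set). norm M)"
    unfolding mn_def by (intro sum_mono) auto
  then show ?thesis by simp
qed

lemma continuous_mn: "continuous_on UNIV (mn :: real^'n^'m \<Rightarrow> real)"
  unfolding mn_def by (intro continuous_intros)

lemma borel_measurable_mn[measurable (raw)]:
  fixes f :: "'a \<Rightarrow> real^'n^'m"
  assumes "f \<in> borel_measurable M"
  shows "(\<lambda>x. mn (f x)) \<in> borel_measurable M"
  using borel_measurable_continuous_on[OF continuous_mn assms] .

definition LQ :: "real \<Rightarrow> (real \<Rightarrow> 'a::euclidean_space) \<Rightarrow> bool" where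
  "LQ p f \<longleftrightarrow> f \<in> borel_measurable lebesgue \<and> integrable lebesgue (\<lambda>t. norm (f t) powr p)"

lemma Icc_leb: "{a..b::real} \<in> sets lebesgue"
  by (metis cbox_interval fmeasurableD lmeasurable_cbox)

lemma Lq_on_LQ: "Lq_on p a b f \<longleftrightarrow> LQ p (\<lambda>t. if t \<in> {a..b} then f t else 0)"
proof -
  have e: "(\<lambda>t. norm (if t \<in> {a..b} then f t else 0) powr p) = (\<lambda>t. if t \<in> {a..b} then norm (f t) powr p else 0)"
    by auto
  show ?thesis
    unfolding Lq_on_def LQ_def e
    using borel_measurable_if[OF Icc_leb[of a b], of f] Lebesgue_Measure.integrable_restrict_UNIV[OF Icc_leb[of a b], of "\<lambda>t. norm (f t) powr p"]
    by blast
qed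

lemma powr_add_le:
  fixes a b p :: real
  assumes "0 \<le> a" "0 \<le> b" "0 < p"
  shows "(a+b) powr p \<le> 2 powr p * (a powr p + b powr p)"
proof -
  have "(a+b) powr p \<le> (2 * max a b) powr p"
    using assms by (intro powr_mono2) auto
  also have "\<dots> = 2 powr p * max a b powr p"
    using assms by (simp add: powr_mult)
  also have "\<dots> \<le> 2 powr p * (a powr p + b powr p)"
    using assms by (intro mult_left_mono) (auto simp: max_def)
  finally show ?thesis .
qed

lemma LQ_add:
  assumes "LQ p f" "LQ p h" "0 < p"
  shows "LQ p (\<lambda>t. f t + h t)"
  unfolding LQ_def
proof
  show m: "(\<lambda>t. f t + h t) \<in> borel_measurable lebesgue"
    using assms unfolding LQ_def by auto
  show "integrable lebesgue (\<lambda>t. norm (f t + h t) powr p)"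
  proof (rule Bochner_Integration.integrable_bound)
    show "integrable lebesgue (\<lambda>t. 2 powr p * (norm (f t) powr p + norm (h t) powr p))"
      using assms unfolding LQ_def by auto
    show "(\<lambda>t. norm (f t + h t) powr p) \<in> borel_measurable lebesgue"
      using m by measurable
    show "AE x in lebesgue. norm (norm (f x + h x) powr p) \<le> norm (2 powr p * (norm (f x) powr p + norm (h x) powr p))"
    proof (intro AE_I2)
      fix x
      have "norm (f x + h x) powr p \<le> (norm (f x) + norm (h x)) powr p"
        using assms by (intro powr_mono2) (auto simp: norm_triangle_ineq)
      also have "\<dots> \<le> 2 powr p * (norm (f x) powr p + norm (h x) powr p)"
        using assms by (intro powr_add_le) auto
      finally show "norm (norm (f x + h x) powr p) \<le> norm (2 powr p * (norm (f x) powr p + norm (h x) powr p))"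
        by simp
    qed
  qed
qed

lemma LQ_zero: "LQ p (\<lambda>t. 0)"
  unfolding LQ_def by simp

lemma LQ_sum:
  assumes "finite J" "\<And>j. j \<in> J \<Longrightarrow> LQ p (F j)" "0 < p"
  shows "LQ p (\<lambda>t. \<Sum>j\<in>J. F j t)"
  using assms by (induction J rule: finite_induct) (auto simp: LQ_zero intro!: LQ_add)

lemma LQ_mv:
  fixes M :: "real^'n^'m"
  assumes "LQ p f" "0 < p"
  shows "LQ p (\<lambda>t. M *v f t)"
  unfolding LQ_def
proof
  show m: "(\<lambda>t. M *v f t) \<in> borel_measurable lebesgue"
    using assms borel_measurable_mv[of "\<lambda>_. M" lebesgue f] unfolding LQ_def by simp
  show "integrable lebesgue (\<lambda>t. norm (M *v f t) powr p)"
  proof (rule Bochner_Integration.integrable_bound)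
    show "integrable lebesgue (\<lambda>t. mn M powr p * norm (f t) powr p)"
      using assms unfolding LQ_def by auto
    show "(\<lambda>t. norm (M *v f t) powr p) \<in> borel_measurable lebesgue"
      using m by measurable
    show "AE x in lebesgue. norm (norm (M *v f x) powr p) \<le> norm (mn M powr p * norm (f x) powr p)"
    proof (intro AE_I2)
      fix x
      have "norm (M *v f x) powr p \<le> (mn M * norm (f x)) powr p"
        using assms by (intro powr_mono2) (auto simp: norm_mv_le)
      also have "\<dots> = mn M powr p * norm (f x) powr p"
        using mn_ge0 by (simp add: powr_mult)
      finally show "norm (norm (M *v f x) powr p) \<le> norm (mn M powr p * norm (f x) powr p)"
        by simp
    qed
  qed
qed

lemma LQ_shift:
  assumes "LQ p f"
  shows "LQ p (\<lambda>t. f (t + c))"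
proof -
  have "(\<lambda>x. f (c + 1 *\<^sub>R x)) \<in> borel_measurable lebesgue"
    using assms unfolding LQ_def by (intro borel_measurable_affine) auto
  moreover have "integrable lebesgue (\<lambda>x. norm (f (c + 1 * x)) powr p)"
    using assms lebesgue_integrable_real_affine[of "\<lambda>t. norm (f t) powr p" 1 c] unfolding LQ_def
    by simp
  ultimately show ?thesis unfolding LQ_def by (simp add: add.commute)
qed

lemma LQ_if:
  assumes "LQ p f" "S \<in> sets lebesgue"
  shows "LQ p (\<lambda>t. if t \<in> S then f t else 0)"
  unfolding LQ_def
proof
  have "f \<in> borel_measurable (lebesgue_on S)"
    using assms unfolding LQ_def by (auto intro: measurable_restrict_space1)
  then show m: "(\<lambda>t. if t \<in> S then f t else 0) \<in> borel_measurable lebesgue"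
    using assms by (simp add: borel_measurable_if)
  show "integrable lebesgue (\<lambda>t. norm (if t \<in> S then f t else 0) powr p)"
  proof (rule Bochner_Integration.integrable_bound)
    show "integrable lebesgue (\<lambda>t. norm (f t) powr p)"
      using assms unfolding LQ_def by auto
    show "(\<lambda>t. norm (if t \<in> S then f t else 0) powr p) \<in> borel_measurable lebesgue"
      using m by measurable
  qed auto
qed

lemma LQ_neg:
  assumes "LQ p f"
  shows "LQ p (\<lambda>t. - f t)"
  using assms unfolding LQ_def by auto

lemma LQ_diff:
  assumes "LQ p f" "LQ p h" "0 < p"
  shows "LQ p (\<lambda>t. f t - h t)"
  using LQ_add[OF assms(1) LQ_neg[OF assms(2)] assms(3)] by simp

lemma emeasure_Icc_finite: "emeasure lebesgue {a..b::real} < \<infinity>"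
  using lmeasurable_cbox[of a b] by (simp add: fmeasurable_def)

lemma LQ_bdd:
  fixes f :: "real \<Rightarrow> 'a::euclidean_space"
  assumes "f \<in> borel_measurable lebesgue" "\<And>t. norm (f t) \<le> B" "\<And>t. t \<notin> {a..b} \<Longrightarrow> f t = 0" "0 < p"
  shows "LQ p f"
  unfolding LQ_def
proof
  show "f \<in> borel_measurable lebesgue" by fact
  show "integrable lebesgue (\<lambda>t. norm (f t) powr p)"
  proof (rule Bochner_Integration.integrable_bound)
    show "integrable lebesgue (\<lambda>t. B powr p * indicator {a..b} t)"
      using emeasure_Icc_finite by (intro integrable_mult_right integrable_real_indicator) auto
    show "(\<lambda>t. norm (f t) powr p) \<in> borel_measurable lebesgue"
      using assms by measurable
    show "AE x in lebesgue. norm (norm (f x) powr p) \<le> norm (B powr p * indicat_real {a..b} x)"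
    proof (intro AE_I2)
      fix x
      have B: "0 \<le> B" using assms(2)[of x] norm_ge_zero[of "f x"] by linarith
      show "norm (norm (f x) powr p) \<le> norm (B powr p * indicat_real {a..b} x)"
      proof (cases "x \<in> {a..b}")
        case True
        then show ?thesis using B assms by (auto intro!: powr_mono2)
      next
        case False
        then show ?thesis using assms by auto
      qed
    qed
  qed
qed

lemma LQ_L1:
  fixes f :: "real \<Rightarrow> 'a::euclidean_space"
  assumes "LQ p f" "1 \<le> p" "\<And>t. t \<notin> {a..b} \<Longrightarrow> f t = 0"
  shows "integrable lebesgue f"
proof (rule Bochner_Integration.integrable_bound)
  show "integrable lebesgue (\<lambda>t. indicator {a..b} t + norm (f t) powr p)"
  proof (rule Bochner_Integration.integrable_add)
    show "integrable lebesgue (indicat_real {a..b})"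
      using emeasure_Icc_finite[of a b] by (intro integrable_real_indicator) auto
    show "integrable lebesgue (\<lambda>t. norm (f t) powr p)"
      using assms unfolding LQ_def by auto
  qed
  show "f \<in> borel_measurable lebesgue" using assms unfolding LQ_def by auto
  show "AE x in lebesgue. norm (f x) \<le> norm (indicat_real {a..b} x + norm (f x) powr p)"
  proof (intro AE_I2)
    fix x
    show "norm (f x) \<le> norm (indicat_real {a..b} x + norm (f x) powr p)"
    proof (cases "norm (f x) \<le> 1")
      case True
      have h: "norm (f x) \<le> indicat_real {a..b} x + norm (f x) powr p"
      proof (cases "x \<in> {a..b}")
        case True
        have "0 \<le> norm (f x) powr p" by simp
        moreover have "indicat_real {a..b} x = 1" using True by simp
        ultimately show ?thesis using \<open>norm (f x) \<le> 1\<close> by linarith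
      next
        case False
        then show ?thesis using assms(3)[of x] by simp
      qed
      have "0 \<le> indicat_real {a..b} x + norm (f x) powr p" by simp
      then show ?thesis using h by simp
    next
      case False
      then have "norm (f x) powr 1 \<le> norm (f x) powr p"
        using assms by (intro powr_mono) auto
      then show ?thesis using False by (auto simp: indicator_def)
    qed
  qed
qed

lemma LQ_L1':
  fixes f :: "real \<Rightarrow> 'a::euclidean_space"
  assumes "LQ p f" "1 \<le> p" "\<And>t. t \<notin> {a..b} \<Longrightarrow> f t = 0"
  shows "LQ 1 f"
proof -
  have i: "integrable lebesgue f" by (rule LQ_L1[OF assms])
  have "(\<lambda>t. norm (f t) powr 1) = (\<lambda>t. norm (f t))" by (simp add: powr_one_gt_zero_iff)
  with i show ?thesis unfolding LQ_def by (simp add: borel_measurable_integrable)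
qed

lemma Lq_on_shift:
  assumes "Lq_on p a b f" "a \<le> c + s" "d + s \<le> b"
  shows "Lq_on p c d (\<lambda>\<theta>. f (s + \<theta>))"
proof -
  let ?F = "\<lambda>t. if t \<in> {a..b} then f t else 0"
  have "LQ p ?F" using assms Lq_on_LQ by blast
  then have "LQ p (\<lambda>t. if t \<in> {c..d} then ?F (t + s) else 0)"
    by (rule LQ_if[OF LQ_shift Icc_leb])
  moreover have "(\<lambda>t. if t \<in> {c..d} then ?F (t + s) else 0) = (\<lambda>t. if t \<in> {c..d} then f (s + t) else 0)"
    using assms by (auto simp: add.commute)
  ultimately have "LQ p (\<lambda>t. if t \<in> {c..d} then f (s + t) else 0)" by simp
  then show ?thesis by (subst Lq_on_LQ)
qed



lemma bor_leb: "f \<in> borel_measurable borel \<Longrightarrow> f \<in> borel_measurable lebesgue"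
  by (intro measurable_completion) simp

lemma borel_sets_leb: "S \<in> sets borel \<Longrightarrow> S \<in> sets lebesgue"
  by simp

lemma finite_Icc: "finite_measure (lebesgue_on {a..b::real})"
  by (intro finite_measure_lebesgue_on) (metis cbox_interval lmeasurable_cbox)

lemma sf_Icc: "sigma_finite_measure (lebesgue_on {a..b::real})"
proof -
  interpret finite_measure "lebesgue_on {a..b::real}" by (rule finite_Icc)
  show ?thesis by unfold_locales
qed

lemma exp_int:
  fixes \<gamma> L :: real
  assumes "0 < \<gamma>" "0 \<le> L"
  shows "integrable (lebesgue_on {0..L}) (\<lambda>s. exp (- \<gamma> * s))"
    and "(\<integral>s. exp (- \<gamma> * s) \<partial>lebesgue_on {0..L}) \<le> 1 / \<gamma>"
proof -
  interpret finite_measure "lebesgue_on {0..L}" by (rule finite_Icc)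
  show i: "integrable (lebesgue_on {0..L}) (\<lambda>s. exp (- \<gamma> * s))"
  proof (rule integrable_const_bound[where B=1])
    show "AE x in lebesgue_on {0..L}. norm (exp (- \<gamma> * x)) \<le> 1"
      using assms by (intro AE_I2) (auto simp: space_restrict_space)
    show "(\<lambda>x. exp (- \<gamma> * x)) \<in> borel_measurable (lebesgue_on {0..L})"
      by (intro measurable_restrict_space1 bor_leb) measurable
  qed
  have "(\<integral>s. exp (- \<gamma> * s) \<partial>lebesgue_on {0..L}) = (\<integral>s. indicator {0..L} s *\<^sub>R exp (- \<gamma> * s) \<partial>lebesgue)"
    by (rule integral_restrict_space) (simp add: Icc_leb)
  also have "\<dots> = (\<integral>s. indicator {0..L} s *\<^sub>R exp (- \<gamma> * s) \<partial>lborel)"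
    by (rule integral_completion) measurable
  also have "\<dots> = (LBINT s. exp (- \<gamma> * s) * indicator {0..L} s)"
    by (simp add: mult.commute)
  also have "\<dots> = (- exp (- \<gamma> * L) / \<gamma>) - (- exp (- \<gamma> * 0) / \<gamma>)"
  proof (rule integral_FTC_Icc_real)
    show "0 \<le> L" by fact
    fix x :: real
    show "((\<lambda>s. - exp (- \<gamma> * s) / \<gamma>) has_real_derivative exp (- \<gamma> * x)) (at x)"
      using assms by (auto intro!: derivative_eq_intros simp: field_simps)
    show "isCont (\<lambda>s. exp (- \<gamma> * s)) x" by (intro continuous_intros)
  qed
  also have "\<dots> \<le> 1 / \<gamma>"
    using assms by (simp add: field_simps)
  finally show "(\<integral>s. exp (- \<gamma> * s) \<partial>lebesgue_on {0..L}) \<le> 1 / \<gamma>" .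
qed

lemma borel_version:
  fixes f :: "real \<Rightarrow> real^'n"
  assumes f: "f \<in> borel_measurable lebesgue"
  shows "\<exists>f'. f' \<in> borel_measurable borel \<and> (AE t in lebesgue. f t = f' t)"
proof -
  have "\<forall>i. \<exists>h \<in> borel_measurable lborel. AE x in lborel. f x $ i = h x"
  proof
    fix i
    have "(\<lambda>x. f x $ i) \<in> borel_measurable lebesgue"
      using f by (intro borel_measurable_continuous_on[where f="\<lambda>v. v $ i"]) (auto intro: continuous_intros)
    then show "\<exists>h \<in> borel_measurable lborel. AE x in lborel. f x $ i = h x"
      by (rule completion_ex_borel_measurable_real)
  qed
  then obtain F where F: "\<And>i. F i \<in> borel_measurable borel" "\<And>i. AE x in lborel. f x $ i = F i x"
    by (metis measurable_lborel2)
  define f' where "f' t = (\<chi> i. F i t)" for t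
  have "f' \<in> borel_measurable borel"
    unfolding borel_measurable_euclidean_space[where f=f']
  proof
    fix b :: "real^'n" assume "b \<in> Basis"
    then obtain i where b: "b = axis i 1" by (auto simp: Basis_vec_def)
    have "(\<lambda>x. f' x \<bullet> b) = F i"
      by (auto simp: b f'_def inner_axis)
    then show "(\<lambda>x. f' x \<bullet> b) \<in> borel_measurable borel" using F by simp
  qed
  moreover have "AE t in lborel. f t = f' t"
  proof -
    have "AE t in lborel. \<forall>i\<in>UNIV. f t $ i = F i t"
      by (intro AE_finite_allI) (auto simp: F)
    then show ?thesis
      by (rule AE_mp) (auto intro!: AE_I2 simp: vec_eq_iff f'_def)
  qed
  ultimately show ?thesis
    by (auto intro: AE_completion)
qed



locale dsys =
  fixes N :: nat and \<Lambda> :: "nat \<Rightarrow> real" and A :: "nat \<Rightarrow> real^'d^'d"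
    and g :: "real \<Rightarrow> real^'d^'d" and q T :: real
  assumes N1: "N \<ge> 1" and L1: "0 < \<Lambda> 1"
    and incr: "\<And>i j. 1 \<le> i \<Longrightarrow> i < j \<Longrightarrow> j \<le> N \<Longrightarrow> \<Lambda> i < \<Lambda> j"
    and ginf: "Linf_on 0 (\<Lambda> N) g" and q1: "1 \<le> q" and T0: "T > 0"
begin

lemma Lam_ge: "j \<in> {1..N} \<Longrightarrow> \<Lambda> 1 \<le> \<Lambda> j"
  using incr[of 1 j] by (cases "j = 1") auto

lemma Lam_le: "j \<in> {1..N} \<Longrightarrow> \<Lambda> j \<le> \<Lambda> N"
  using incr[of j N] by (cases "j = N") auto

lemma LN_pos: "0 < \<Lambda> N"
  using Lam_ge[of N] N1 L1 by auto

lemma q0: "0 < q" using q1 by simp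

definition Cg where "Cg = (SOME C. AE t in lebesgue_on {0..\<Lambda> N}. norm (g t) \<le> C)"

lemma Cg: "AE t in lebesgue_on {0..\<Lambda> N}. norm (g t) \<le> Cg"
  unfolding Cg_def using ginf unfolding Linf_on_def by (rule someI_ex[OF conjunct2])

lemma g_meas: "g \<in> borel_measurable (lebesgue_on {0..\<Lambda> N})"
  using ginf unfolding Linf_on_def by auto

definition Mg where "Mg = real CARD('d) * real CARD('d) * \<bar>Cg\<bar> + 1"

lemma Mg_pos: "0 < Mg"
  unfolding Mg_def by (simp add: add_nonneg_pos)

definition gt where "gt s = (if mn (g s) \<le> Mg then g s else 0)"

lemma gt_bound: "mn (gt s) \<le> Mg"
  using Mg_pos by (auto simp: gt_def mn_def)

lemma gt_meas: "gt \<in> borel_measurable (lebesgue_on {0..\<Lambda> N})"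
  unfolding gt_def using g_meas by measurable

lemma gt_ae: "AE s in lebesgue_on {0..\<Lambda> N}. g s = gt s"
  using Cg
proof (rule AE_mp, intro AE_I2 impI)
  fix s assume "norm (g s) \<le> Cg"
  then have "mn (g s) \<le> real CARD('d) * real CARD('d) * \<bar>Cg\<bar>"
    using mn_le_norm[of "g s"] by (smt (verit) mult_left_mono of_nat_0_le_iff zero_le_mult_iff)
  then show "g s = gt s" unfolding gt_def Mg_def by auto
qed

definition V :: "(real \<Rightarrow> real^'d) \<Rightarrow> real \<Rightarrow> real^'d" where
  "V h t = (\<integral>s. gt s *v h (t - s) \<partial>lebesgue_on {0..\<Lambda> N})"

lemma shift_meas:
  fixes h :: "real \<Rightarrow> 'b::euclidean_space"
  assumes "h \<in> borel_measurable lebesgue"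
  shows "(\<lambda>s. h (t - s)) \<in> borel_measurable (lebesgue_on S)"
proof -
  have "(\<lambda>s. h (t + (-1) *\<^sub>R s)) \<in> borel_measurable lebesgue"
    by (rule borel_measurable_affine[OF assms]) simp
  then show ?thesis by (intro measurable_restrict_space1) simp
qed

lemma V_int:
  assumes "h \<in> borel_measurable lebesgue" "integrable lebesgue h"
  shows "integrable (lebesgue_on {0..\<Lambda> N}) (\<lambda>s. gt s *v h (t - s))"
proof (rule Bochner_Integration.integrable_bound)
  have "integrable lebesgue (\<lambda>s. h (t + (-1) * s))"
    by (rule lebesgue_integrable_real_affine[OF assms(2)]) simp
  then have "integrable lebesgue (\<lambda>s. indicator {0..\<Lambda> N} s *\<^sub>R (Mg *\<^sub>R h (t - s)))"
    by (intro integrable_mult_indicator integrable_scaleR_right) (auto simp: Icc_leb)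
  then show "integrable (lebesgue_on {0..\<Lambda> N}) (\<lambda>s. Mg *\<^sub>R h (t - s))"
    by (subst integrable_restrict_space) (auto simp: Icc_leb)
  show "(\<lambda>s. gt s *v h (t - s)) \<in> borel_measurable (lebesgue_on {0..\<Lambda> N})"
    using gt_meas shift_meas[OF assms(1)] by (intro borel_measurable_mv)
  show "AE x in lebesgue_on {0..\<Lambda> N}. norm (gt x *v h (t - x)) \<le> norm (Mg *\<^sub>R h (t - x))"
  proof (intro AE_I2)
    fix x
    have "norm (gt x *v h (t - x)) \<le> mn (gt x) * norm (h (t - x))" by (rule norm_mv_le)
    also have "\<dots> \<le> Mg * norm (h (t - x))" by (intro mult_right_mono gt_bound) auto
    finally show "norm (gt x *v h (t - x)) \<le> norm (Mg *\<^sub>R h (t - x))"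
      using Mg_pos by simp
  qed
qed

lemma V_bound1:
  assumes "h \<in> borel_measurable lebesgue" "integrable lebesgue h"
  shows "norm (V h t) \<le> Mg * (\<integral>x. norm (h x) \<partial>lebesgue)"
proof -
  have i2: "integrable lebesgue (\<lambda>s. norm (h (t + (-1) * s)))"
    by (intro integrable_norm lebesgue_integrable_real_affine[OF assms(2)]) simp
  have i3: "integrable (lebesgue_on {0..\<Lambda> N}) (\<lambda>s. norm (h (t - s)))"
  proof -
    have "integrable lebesgue (\<lambda>s. indicator {0..\<Lambda> N} s *\<^sub>R norm (h (t - s)))"
      using i2 by (intro integrable_mult_indicator) (auto simp: Icc_leb)
    then show ?thesis
      by (subst integrable_restrict_space) (auto simp: Icc_leb)
  qed
  have "norm (V h t) \<le> (\<integral>s. norm (gt s *v h (t - s)) \<partial>lebesgue_on {0..\<Lambda> N})"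
    unfolding V_def by (rule integral_norm_bound)
  also have "\<dots> \<le> (\<integral>s. Mg * norm (h (t - s)) \<partial>lebesgue_on {0..\<Lambda> N})"
  proof (rule integral_mono)
    show "integrable (lebesgue_on {0..\<Lambda> N}) (\<lambda>s. norm (gt s *v h (t - s)))"
      by (intro integrable_norm V_int assms)
    show "integrable (lebesgue_on {0..\<Lambda> N}) (\<lambda>s. Mg * norm (h (t - s)))"
      using i3 by simp
    fix s
    have "norm (gt s *v h (t - s)) \<le> mn (gt s) * norm (h (t - s))" by (rule norm_mv_le)
    also have "\<dots> \<le> Mg * norm (h (t - s))" by (intro mult_right_mono gt_bound) auto
    finally show "norm (gt s *v h (t - s)) \<le> Mg * norm (h (t - s))" .
  qed
  also have "\<dots> = Mg * (\<integral>s. norm (h (t - s)) \<partial>lebesgue_on {0..\<Lambda> N})"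
    by simp
  also have "\<dots> \<le> Mg * (\<integral>s. norm (h (t - s)) \<partial>lebesgue_on UNIV)"
  proof (intro mult_left_mono)
    show "(\<integral>s. norm (h (t - s)) \<partial>lebesgue_on {0..\<Lambda> N}) \<le> (\<integral>s. norm (h (t - s)) \<partial>lebesgue_on UNIV)"
      using i2 by (intro integral_mono_lebesgue_on_AE) (auto simp: lebesgue_on_UNIV_eq Icc_leb)
  qed (use Mg_pos in auto)
  also have "(\<integral>s. norm (h (t - s)) \<partial>lebesgue_on UNIV) = (\<integral>x. norm (h x) \<partial>lebesgue)"
    using lebesgue_integral_real_affine[of "-1" "\<lambda>x. norm (h x)" t]
    by (simp add: lebesgue_on_UNIV_eq)
  finally show ?thesis .
qed

lemma V_bound_exp:
  assumes "h \<in> borel_measurable lebesgue" "\<And>\<tau>. norm (h \<tau>) \<le> C * exp (\<gamma> * \<tau>)" "0 < \<gamma>" "0 \<le> C"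
  shows "norm (V h t) \<le> Mg * C * exp (\<gamma> * t) / \<gamma>"
proof -
  interpret finite_measure "lebesgue_on {0..\<Lambda> N}" by (rule finite_Icc)
  have b: "norm (gt s *v h (t - s)) \<le> Mg * C * exp (\<gamma> * t) * exp (- \<gamma> * s)" for s
  proof -
    have "norm (gt s *v h (t - s)) \<le> mn (gt s) * norm (h (t - s))" by (rule norm_mv_le)
    also have "\<dots> \<le> Mg * (C * exp (\<gamma> * (t - s)))"
      using assms(2)[of "t - s"] gt_bound[of s] Mg_pos
      by (intro mult_mono) (auto simp: mn_ge0)
    also have "\<dots> = Mg * C * exp (\<gamma> * t) * exp (- \<gamma> * s)"
      by (simp add: right_diff_distrib exp_diff exp_minus field_simps)
    finally show ?thesis .
  qed
  have m: "(\<lambda>s. gt s *v h (t - s)) \<in> borel_measurable (lebesgue_on {0..\<Lambda> N})"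
    using gt_meas shift_meas[OF assms(1)] by (intro borel_measurable_mv)
  have i: "integrable (lebesgue_on {0..\<Lambda> N}) (\<lambda>s. gt s *v h (t - s))"
  proof (rule integrable_const_bound[where B="Mg * C * exp (\<gamma> * t)"])
    show "AE x in lebesgue_on {0..\<Lambda> N}. norm (gt x *v h (t - x)) \<le> Mg * C * exp (\<gamma> * t)"
    proof (intro AE_I2 impI)
      fix x assume "x \<in> space (lebesgue_on {0..\<Lambda> N})"
      then have "exp (- \<gamma> * x) \<le> 1" using assms by auto
      then have "Mg * C * exp (\<gamma> * t) * exp (- \<gamma> * x) \<le> Mg * C * exp (\<gamma> * t)"
        using Mg_pos assms by (intro mult_left_le) auto
      then show "norm (gt x *v h (t - x)) \<le> Mg * C * exp (\<gamma> * t)" using b[of x] by linarith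
    qed
  qed (rule m)
  have "norm (V h t) \<le> (\<integral>s. norm (gt s *v h (t - s)) \<partial>lebesgue_on {0..\<Lambda> N})"
    unfolding V_def by (rule integral_norm_bound)
  also have "\<dots> \<le> (\<integral>s. Mg * C * exp (\<gamma> * t) * exp (- \<gamma> * s) \<partial>lebesgue_on {0..\<Lambda> N})"
    using exp_int(1)[OF assms(3) less_imp_le[OF LN_pos]] i b
    by (intro integral_mono) auto
  also have "\<dots> = Mg * C * exp (\<gamma> * t) * (\<integral>s. exp (- \<gamma> * s) \<partial>lebesgue_on {0..\<Lambda> N})"
    by simp
  also have "\<dots> \<le> Mg * C * exp (\<gamma> * t) * (1 / \<gamma>)"
    using exp_int(2)[OF assms(3) less_imp_le[OF LN_pos]] Mg_pos assms
    by (intro mult_left_mono) auto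
  finally show ?thesis by simp
qed

lemma V_meas:
  assumes "h \<in> borel_measurable borel"
  shows "V h \<in> borel_measurable borel"
proof -
  interpret sigma_finite_measure "lebesgue_on {0..\<Lambda> N}" by (rule sf_Icc)
  have id: "(\<lambda>x. x) \<in> lebesgue_on {0..\<Lambda> N} \<rightarrow>\<^sub>M (borel :: real measure)"
    by (intro measurable_restrict_space1 bor_leb) simp
  have s: "snd \<in> borel \<Otimes>\<^sub>M lebesgue_on {0..\<Lambda> N} \<rightarrow>\<^sub>M (borel :: real measure)"
    using measurable_compose[OF measurable_snd[of borel "lebesgue_on {0..\<Lambda> N}"] id] by simp
  have f: "fst \<in> borel \<Otimes>\<^sub>M lebesgue_on {0..\<Lambda> N} \<rightarrow>\<^sub>M (borel :: real measure)"
    by (rule measurable_fst'') simp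
  have d: "(\<lambda>x. fst x - snd x) \<in> borel_measurable (borel \<Otimes>\<^sub>M lebesgue_on {0..\<Lambda> N})"
    using f s by (intro borel_measurable_diff)
  have "(\<lambda>x. h (fst x - snd x)) \<in> borel_measurable (borel \<Otimes>\<^sub>M lebesgue_on {0..\<Lambda> N})"
    using measurable_compose[OF d assms] .
  moreover have "(\<lambda>x. gt (snd x)) \<in> borel_measurable (borel \<Otimes>\<^sub>M lebesgue_on {0..\<Lambda> N})"
    using measurable_compose[OF measurable_snd gt_meas] .
  ultimately have "(\<lambda>x. gt (snd x) *v h (fst x - snd x)) \<in> borel_measurable (borel \<Otimes>\<^sub>M lebesgue_on {0..\<Lambda> N})"
    by (intro borel_measurable_mv)
  then have "case_prod (\<lambda>t s. gt s *v h (t - s)) \<in> borel_measurable (borel \<Otimes>\<^sub>M lebesgue_on {0..\<Lambda> N})"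
    by (simp add: case_prod_beta')
  then show ?thesis
    unfolding V_def[abs_def] by (rule borel_measurable_lebesgue_integral)
qed

definition aA where "aA = (\<Sum>j\<in>{1..N}. mn (A j))"

lemma aA_ge0: "0 \<le> aA" unfolding aA_def by (simp add: sum_nonneg mn_ge0)

definition Ed :: "(real \<Rightarrow> real^'d) \<Rightarrow> real \<Rightarrow> real^'d" where
  "Ed k t = (\<Sum>j\<in>{1..N}. A j *v k (t - \<Lambda> j)) + V k t"

lemma Ed_bound:
  assumes "k \<in> borel_measurable lebesgue" "\<And>\<tau>. norm (k \<tau>) \<le> C * exp (\<gamma> * \<tau>)" "0 < \<gamma>" "0 \<le> C"
  shows "norm (Ed k t) \<le> (aA * exp (- \<gamma> * \<Lambda> 1) + Mg / \<gamma>) * C * exp (\<gamma> * t)"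
proof -
  have "norm (\<Sum>j\<in>{1..N}. A j *v k (t - \<Lambda> j)) \<le> (\<Sum>j\<in>{1..N}. norm (A j *v k (t - \<Lambda> j)))"
    by (rule norm_sum)
  also have "\<dots> \<le> (\<Sum>j\<in>{1..N}. mn (A j) * (C * exp (\<gamma> * t) * exp (- \<gamma> * \<Lambda> 1)))"
  proof (rule sum_mono)
    fix j assume j: "j \<in> {1..N}"
    have "norm (A j *v k (t - \<Lambda> j)) \<le> mn (A j) * norm (k (t - \<Lambda> j))" by (rule norm_mv_le)
    also have "\<dots> \<le> mn (A j) * (C * exp (\<gamma> * (t - \<Lambda> j)))"
      using assms(2) by (intro mult_left_mono mn_ge0) auto
    also have "\<dots> \<le> mn (A j) * (C * exp (\<gamma> * t) * exp (- \<gamma> * \<Lambda> 1))"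
    proof (intro mult_left_mono mn_ge0)
      have "exp (\<gamma> * (t - \<Lambda> j)) \<le> exp (\<gamma> * t + (- \<gamma> * \<Lambda> 1))"
        using Lam_ge[OF j] assms(3) by (auto simp: algebra_simps)
      also have "\<dots> = exp (\<gamma> * t) * exp (- \<gamma> * \<Lambda> 1)" by (rule exp_add)
      finally have "exp (\<gamma> * (t - \<Lambda> j)) \<le> exp (\<gamma> * t) * exp (- \<gamma> * \<Lambda> 1)" .
      then have "C * exp (\<gamma> * (t - \<Lambda> j)) \<le> C * (exp (\<gamma> * t) * exp (- \<gamma> * \<Lambda> 1))"
        using assms(4) by (rule mult_left_mono)
      then show "C * exp (\<gamma> * (t - \<Lambda> j)) \<le> C * exp (\<gamma> * t) * exp (- \<gamma> * \<Lambda> 1)"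
        by (simp add: mult.assoc)
    qed
    finally show "norm (A j *v k (t - \<Lambda> j)) \<le> mn (A j) * (C * exp (\<gamma> * t) * exp (- \<gamma> * \<Lambda> 1))" .
  qed
  also have "\<dots> = (\<Sum>j\<in>{1..N}. mn (A j)) * (C * exp (\<gamma> * t) * exp (- \<gamma> * \<Lambda> 1))"
    by (rule sum_distrib_right[symmetric])
  also have "\<dots> = aA * exp (- \<gamma> * \<Lambda> 1) * C * exp (\<gamma> * t)"
    unfolding aA_def by (simp only: mult_ac)
  finally have s: "norm (\<Sum>j\<in>{1..N}. A j *v k (t - \<Lambda> j)) \<le> aA * exp (- \<gamma> * \<Lambda> 1) * C * exp (\<gamma> * t)" .
  have v: "norm (V k t) \<le> Mg * C * exp (\<gamma> * t) / \<gamma>"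
    by (rule V_bound_exp[OF assms])
  have "norm (Ed k t) \<le> norm (\<Sum>j\<in>{1..N}. A j *v k (t - \<Lambda> j)) + norm (V k t)"
    unfolding Ed_def by (rule norm_triangle_ineq)
  also have "\<dots> \<le> aA * exp (- \<gamma> * \<Lambda> 1) * C * exp (\<gamma> * t) + Mg * C * exp (\<gamma> * t) / \<gamma>"
    using s v by linarith
  also have "\<dots> = (aA * exp (- \<gamma> * \<Lambda> 1) + Mg / \<gamma>) * C * exp (\<gamma> * t)"
    by (simp add: field_simps)
  finally show ?thesis .
qed

end



locale dsys_phi = dsys N \<Lambda> A g q T for N \<Lambda> and A :: "nat \<Rightarrow> real^'d^'d" and g q T +
  fixes \<phi>0 :: "real \<Rightarrow> real^'d"
  assumes phi0_borel: "\<phi>0 \<in> borel_measurable borel"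
    and phi0_LQ: "LQ q \<phi>0"
    and phi0_supp: "\<And>t. t \<notin> {- \<Lambda> N..0} \<Longrightarrow> \<phi>0 t = 0"
begin

definition Dop :: "(real \<Rightarrow> real^'d) \<Rightarrow> real \<Rightarrow> real^'d" where
  "Dop h t = (if t \<le> 0 then \<phi>0 t else if t \<le> T then (\<Sum>j\<in>{1..N}. A j *v h (t - \<Lambda> j)) else 0)"

definition P where "P k = (Dop ^^ k) (\<lambda>_. 0)"

lemma P_Suc: "P (Suc k) = Dop (P k)"
  by (simp add: P_def)

lemma P_agree: "t < real k * \<Lambda> 1 \<Longrightarrow> P (Suc k) t = P (Suc (Suc k)) t"
proof (induction k arbitrary: t)
  case 0
  then show ?case using L1 by (simp add: P_Suc Dop_def)
next
  case (Suc k)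
  show ?case
  proof (cases "t \<le> 0 \<or> t > T")
    case True
    then show ?thesis by (auto simp: P_Suc[of "Suc (Suc k)"] P_Suc[of "Suc k"] Dop_def)
  next
    case False
    have "(\<Sum>j\<in>{1..N}. A j *v P (Suc k) (t - \<Lambda> j)) = (\<Sum>j\<in>{1..N}. A j *v P (Suc (Suc k)) (t - \<Lambda> j))"
    proof (rule sum.cong)
      fix j assume j: "j \<in> {1..N}"
      have "t - \<Lambda> j < real k * \<Lambda> 1"
        using Suc.prems Lam_ge[OF j] by (simp add: algebra_simps)
      then show "A j *v P (Suc k) (t - \<Lambda> j) = A j *v P (Suc (Suc k)) (t - \<Lambda> j)"
        using Suc.IH by simp
    qed simp
    then show ?thesis using False
      by (simp add: P_Suc[of "Suc (Suc k)"] P_Suc[of "Suc k"] Dop_def)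
  qed
qed

definition KK where "KK = nat \<lceil>T / \<Lambda> 1\<rceil> + 1"

lemma KK: "T < real KK * \<Lambda> 1"
proof -
  have "T / \<Lambda> 1 \<le> real (nat \<lceil>T / \<Lambda> 1\<rceil>)" by linarith
  then have "T \<le> real (nat \<lceil>T / \<Lambda> 1\<rceil>) * \<Lambda> 1" using L1 by (simp add: field_simps)
  then show ?thesis using L1 by (simp add: KK_def algebra_simps)
qed

definition p where "p = P (Suc KK)"

lemma p_fix: "Dop p t = p t"
proof (cases "t < real KK * \<Lambda> 1")
  case True
  then show ?thesis using P_agree[OF True] by (simp add: p_def P_Suc[symmetric])
next
  case False
  then have "t > T" "t > 0" using KK T0 by auto
  then show ?thesis by (simp add: p_def P_Suc Dop_def)
qed

lemma Dop_meas:
  assumes [measurable]: "h \<in> borel_measurable borel"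
  shows "Dop h \<in> borel_measurable borel"
proof -
  have [measurable]: "\<phi>0 \<in> borel_measurable borel" by (rule phi0_borel)
  have [measurable]: "(\<lambda>t. A j *v h (t - \<Lambda> j)) \<in> borel_measurable borel" for j
    by (intro borel_measurable_mv) measurable
  show ?thesis unfolding Dop_def[abs_def] by measurable
qed

lemma P_meas: "P k \<in> borel_measurable borel"
  by (induction k) (auto simp: P_Suc intro: Dop_meas, simp add: P_def)

lemma Dop_LQ:
  assumes "LQ r h" "LQ r \<phi>0" "0 < r"
  shows "LQ r (Dop h)"
proof -
  have e: "Dop h = (\<lambda>t. (if t \<in> {..0} then \<phi>0 t else 0) +
      (if t \<in> {0<..T} then (\<Sum>j\<in>{1..N}. A j *v h (t + (- \<Lambda> j))) else 0))"
    by (auto simp: Dop_def fun_eq_iff)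
  show ?thesis unfolding e
    using assms
    by (intro LQ_add LQ_if LQ_sum LQ_mv LQ_shift) auto
qed

lemma P_supp: "t \<notin> {- \<Lambda> N..T} \<Longrightarrow> P k t = 0"
  using T0 LN_pos by (cases k) (auto simp: P_def Dop_def phi0_supp)

lemma P_LQ: "LQ r \<phi>0 \<Longrightarrow> 0 < r \<Longrightarrow> LQ r (P k)"
  by (induction k) (auto simp: P_Suc intro: Dop_LQ, simp add: P_def LQ_zero)

lemma p_meas: "p \<in> borel_measurable borel"
  unfolding p_def by (rule P_meas)

lemma p_LQ: "LQ q p"
  unfolding p_def using phi0_LQ q0 by (rule P_LQ)

lemma p_supp: "t \<notin> {- \<Lambda> N..T} \<Longrightarrow> p t = 0"
  unfolding p_def by (rule P_supp)

lemma p_L1: "integrable lebesgue p"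
  using p_LQ q1 p_supp by (rule LQ_L1)

lemma p_leb: "p \<in> borel_measurable lebesgue"
  using p_meas by (rule bor_leb)

end



context dsys_phi
begin

definition Eop :: "(real \<Rightarrow> real^'d) \<Rightarrow> real \<Rightarrow> real^'d" where
  "Eop h t = (if t \<in> {0<..T} then (\<Sum>j\<in>{1..N}. A j *v h (t - \<Lambda> j)) + V (\<lambda>\<tau>. p \<tau> + h \<tau>) t else 0)"

definition R where "R n = (Eop ^^ n) (\<lambda>_. 0)"

lemma R_Suc: "R (Suc n) = Eop (R n)"
  by (simp add: R_def)

definition Good :: "(real \<Rightarrow> real^'d) \<Rightarrow> bool" where
  "Good h \<longleftrightarrow> h \<in> borel_measurable borel \<and> (\<exists>B. \<forall>t. norm (h t) \<le> B) \<and> (\<forall>t. t \<notin> {0<..T} \<longrightarrow> h t = 0)"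

lemma Good_L1:
  assumes "Good h" shows "integrable lebesgue h" "h \<in> borel_measurable lebesgue"
proof -
  from assms obtain B where B: "\<And>t. norm (h t) \<le> B" and m: "h \<in> borel_measurable borel"
    and s: "\<And>t. t \<notin> {0<..T} \<Longrightarrow> h t = 0"
    unfolding Good_def by auto
  show hm: "h \<in> borel_measurable lebesgue" using m by (rule bor_leb)
  have "LQ 1 h"
    using hm B s by (intro LQ_bdd[where a=0 and b=T and B=B]) auto
  then show "integrable lebesgue h"
    using s by (intro LQ_L1[where a=0 and b=T and p=1]) auto
qed

lemma Good_zero: "Good (\<lambda>_. 0)"
  unfolding Good_def by auto

lemma Good_E:
  assumes "Good h" shows "Good (Eop h)"
proof -
  from assms obtain B where B: "\<And>t. norm (h t) \<le> B" and m[measurable]: "h \<in> borel_measurable borel"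
    and s: "\<And>t. t \<notin> {0<..T} \<Longrightarrow> h t = 0"
    unfolding Good_def by auto
  have [measurable]: "p \<in> borel_measurable borel" by (rule p_meas)
  have [measurable]: "V (\<lambda>\<tau>. p \<tau> + h \<tau>) \<in> borel_measurable borel"
    by (intro V_meas) measurable
  have [measurable]: "(\<lambda>t. A j *v h (t - \<Lambda> j)) \<in> borel_measurable borel" for j
    by (intro borel_measurable_mv) measurable
  have meas: "Eop h \<in> borel_measurable borel"
    unfolding Eop_def[abs_def] by measurable
  have ph_int: "integrable lebesgue (\<lambda>\<tau>. p \<tau> + h \<tau>)"
    using p_L1 Good_L1[OF assms] by auto
  have ph_m: "(\<lambda>\<tau>. p \<tau> + h \<tau>) \<in> borel_measurable lebesgue"
    using p_leb Good_L1[OF assms] by auto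
  let ?B = "aA * B + Mg * (\<integral>x. norm (p x + h x) \<partial>lebesgue)"
  have "norm (Eop h t) \<le> ?B" for t
  proof (cases "t \<in> {0<..T}")
    case True
    have "norm (\<Sum>j\<in>{1..N}. A j *v h (t - \<Lambda> j)) \<le> (\<Sum>j\<in>{1..N}. norm (A j *v h (t - \<Lambda> j)))"
      by (rule norm_sum)
    also have "\<dots> \<le> (\<Sum>j\<in>{1..N}. mn (A j) * B)"
      by (intro sum_mono order_trans[OF norm_mv_le] mult_left_mono B mn_ge0)
    also have "\<dots> = aA * B" by (simp add: aA_def sum_distrib_right)
    finally have 1: "norm (\<Sum>j\<in>{1..N}. A j *v h (t - \<Lambda> j)) \<le> aA * B" .
    have 2: "norm (V (\<lambda>\<tau>. p \<tau> + h \<tau>) t) \<le> Mg * (\<integral>x. norm (p x + h x) \<partial>lebesgue)"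
      by (rule V_bound1[OF ph_m ph_int])
    show ?thesis using True 1 2 norm_triangle_ineq[of "\<Sum>j\<in>{1..N}. A j *v h (t - \<Lambda> j)" "V (\<lambda>\<tau>. p \<tau> + h \<tau>) t"]
      by (simp add: Eop_def)
  next
    case False
    have "0 \<le> B" using B[of 0] norm_ge_zero[of "h 0"] by linarith
    then have "0 \<le> ?B" using aA_ge0 Mg_pos by (intro add_nonneg_nonneg mult_nonneg_nonneg integral_nonneg_AE) auto
    then show ?thesis using False by (auto simp: Eop_def)
  qed
  then have "\<exists>B. \<forall>t. norm (Eop h t) \<le> B" by blast
  then show ?thesis unfolding Good_def using meas by (simp add: Eop_def)
qed

lemma R_Good: "Good (R n)"
  by (induction n) (auto simp: R_Suc intro: Good_E, simp add: R_def Good_zero)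

lemma E_diff:
  assumes "Good h1" "Good h2"
  shows "Eop h1 t - Eop h2 t = (if t \<in> {0<..T} then Ed (\<lambda>\<tau>. h1 \<tau> - h2 \<tau>) t else 0)"
proof (cases "t \<in> {0<..T}")
  case True
  have i: "integrable lebesgue (\<lambda>\<tau>. p \<tau> + h \<tau>)" "(\<lambda>\<tau>. p \<tau> + h \<tau>) \<in> borel_measurable lebesgue"
    if "Good h" for h
    using p_L1 p_leb Good_L1[OF that] by auto
  have "V (\<lambda>\<tau>. p \<tau> + h1 \<tau>) t - V (\<lambda>\<tau>. p \<tau> + h2 \<tau>) t
      = (\<integral>s. gt s *v (p (t - s) + h1 (t - s)) - gt s *v (p (t - s) + h2 (t - s)) \<partial>lebesgue_on {0..\<Lambda> N})"
    unfolding V_def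
    by (rule Bochner_Integration.integral_diff[symmetric]) (intro V_int i assms)+
  also have "\<dots> = V (\<lambda>\<tau>. h1 \<tau> - h2 \<tau>) t"
    unfolding V_def by (intro Bochner_Integration.integral_cong refl) (simp add: algebra_simps)
  finally have v: "V (\<lambda>\<tau>. p \<tau> + h1 \<tau>) t - V (\<lambda>\<tau>. p \<tau> + h2 \<tau>) t = V (\<lambda>\<tau>. h1 \<tau> - h2 \<tau>) t" .
  have s: "(\<Sum>j\<in>{1..N}. A j *v h1 (t - \<Lambda> j)) - (\<Sum>j\<in>{1..N}. A j *v h2 (t - \<Lambda> j))
      = (\<Sum>j\<in>{1..N}. A j *v (h1 (t - \<Lambda> j) - h2 (t - \<Lambda> j)))"
    by (simp add: sum_subtractf[symmetric] algebra_simps)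
  show ?thesis using True v s by (simp add: Eop_def Ed_def algebra_simps)
next
  case False
  then show ?thesis by (auto simp: Eop_def)
qed

definition gam where "gam = 4 * Mg + ln (4 * aA + 1) / \<Lambda> 1 + 1"

lemma gam_pos: "0 < gam"
proof -
  have "0 \<le> ln (4 * aA + 1)" using aA_ge0 by simp
  then show ?thesis using Mg_pos L1 unfolding gam_def by (simp add: add_nonneg_pos)
qed

lemma contr: "aA * exp (- gam * \<Lambda> 1) + Mg / gam \<le> 1/2"
proof -
  have "0 \<le> ln (4 * aA + 1)" using aA_ge0 by simp
  have "ln (4 * aA + 1) / \<Lambda> 1 \<le> gam" using Mg_pos unfolding gam_def by simp
  then have "ln (4 * aA + 1) \<le> gam * \<Lambda> 1" using L1 by (simp add: field_simps)
  then have "exp (ln (4 * aA + 1)) \<le> exp (gam * \<Lambda> 1)" by simp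
  then have "4 * aA + 1 \<le> exp (gam * \<Lambda> 1)" using aA_ge0 by simp
  then have "aA * exp (- gam * \<Lambda> 1) \<le> 1/4"
    using aA_ge0 by (simp add: exp_minus field_simps)
  moreover have "Mg / gam \<le> 1/4"
    using gam_pos Mg_pos L1 \<open>0 \<le> ln (4 * aA + 1)\<close> unfolding gam_def by (simp add: field_simps)
  ultimately show ?thesis by linarith
qed

definition Dl where "Dl n t = R (Suc n) t - R n t"

definition K0 where "K0 = Mg * (\<integral>x. norm (p x) \<partial>lebesgue)"

lemma K0_ge0: "0 \<le> K0"
  unfolding K0_def using Mg_pos by (intro mult_nonneg_nonneg integral_nonneg_AE) auto

lemma Dl_bound: "norm (Dl n t) \<le> K0 * (1/2)^n * exp (gam * t)"
proof (induction n arbitrary: t)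
  case 0
  show ?case
  proof (cases "t \<in> {0<..T}")
    case True
    have "norm (V p t) \<le> K0" unfolding K0_def by (rule V_bound1[OF p_leb p_L1])
    also have "\<dots> \<le> K0 * exp (gam * t)"
    proof -
      have "1 \<le> exp (gam * t)" using True gam_pos by simp
      then show ?thesis using mult_left_mono[of 1 "exp (gam * t)" K0] K0_ge0 by simp
    qed
    finally show ?thesis using True by (simp add: Dl_def R_def Eop_def)
  next
    case False
    then show ?thesis using K0_ge0 by (auto simp: Dl_def R_def Eop_def)
  qed
next
  case (Suc n)
  show ?case
  proof (cases "t \<in> {0<..T}")
    case True
    have "Dl (Suc n) t = Ed (Dl n) t"
      using E_diff[OF R_Good[of "Suc n"] R_Good[of n], of t] True
      by (simp add: Dl_def[abs_def] R_Suc[of "Suc n"] R_Suc[of n])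
    also have "norm \<dots> \<le> (aA * exp (- gam * \<Lambda> 1) + Mg / gam) * (K0 * (1/2)^n) * exp (gam * t)"
    proof (rule Ed_bound)
      show "Dl n \<in> borel_measurable lebesgue"
        using Good_L1(2)[OF R_Good] unfolding Dl_def[abs_def] by measurable
      show "norm (Dl n \<tau>) \<le> K0 * (1 / 2) ^ n * exp (gam * \<tau>)" for \<tau> by (rule Suc.IH)
    qed (use gam_pos K0_ge0 in auto)
    also have "\<dots> \<le> 1/2 * (K0 * (1/2)^n) * exp (gam * t)"
      using contr K0_ge0 by (intro mult_right_mono) auto
    finally show ?thesis by simp
  next
    case False
    then have "Dl (Suc n) t = 0"
      using R_Good[of "Suc (Suc n)"] R_Good[of "Suc n"] by (simp add: Dl_def Good_def)
    then show ?thesis using K0_ge0 by simp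
  qed
qed

definition W where "W = K0 * exp (gam * T)"

lemma W_ge0: "0 \<le> W" unfolding W_def using K0_ge0 by simp

lemma Dl_bound2: "norm (Dl n t) \<le> W * (1/2)^n"
proof (cases "t \<in> {0<..T}")
  case True
  have "norm (Dl n t) \<le> K0 * (1/2)^n * exp (gam * t)" by (rule Dl_bound)
  also have "\<dots> \<le> K0 * (1/2)^n * exp (gam * T)"
    using True gam_pos K0_ge0 by (intro mult_left_mono) auto
  finally show ?thesis by (simp add: W_def mult_ac)
next
  case False
  then have "Dl n t = 0"
    using R_Good[of "Suc n"] R_Good[of n] by (simp add: Dl_def Good_def)
  then show ?thesis using W_ge0 by simp
qed

lemma Dl_summable: "summable (\<lambda>n. Dl n t)"
  by (rule summable_comparison_test'[where g="\<lambda>n. W * (1/2)^n" and N=0])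
     (auto intro: Dl_bound2 summable_mult summable_geometric)

definition r where "r t = (\<Sum>n. Dl n t)"

lemma R_sum: "R n t = (\<Sum>k<n. Dl k t)"
  by (induction n) (auto simp: R_def Dl_def)

lemma R_lim: "(\<lambda>n. R n t) \<longlonglongrightarrow> r t"
  unfolding R_sum r_def by (rule summable_LIMSEQ[OF Dl_summable])

lemma R_tail: "norm (r t - R n t) \<le> 2 * W * (1/2)^n"
proof -
  have b: "norm (R (m + n) t - R n t) \<le> 2 * W * (1/2)^n * (1 - (1/2)^m)" for m
  proof (induction m)
    case 0 then show ?case by simp
  next
    case (Suc m)
    have eq: "R (Suc m + n) t - R n t = (R (m + n) t - R n t) + Dl (m + n) t"
      by (simp add: Dl_def)
    have "norm (R (Suc m + n) t - R n t) \<le> norm (R (m + n) t - R n t) + norm (Dl (m + n) t)"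
      unfolding eq by (rule norm_triangle_ineq)
    also have "\<dots> \<le> 2 * W * (1/2)^n * (1 - (1/2)^m) + W * (1/2)^(m + n)"
      using Suc.IH Dl_bound2[of "m + n" t] by linarith
    also have "\<dots> = 2 * W * (1/2)^n * (1 - (1/2)^(Suc m))"
      by (simp add: power_add field_simps)
    finally show ?case .
  qed
  have lim: "(\<lambda>m. norm (R (m + n) t - R n t)) \<longlonglongrightarrow> norm (r t - R n t)"
    by (intro tendsto_norm tendsto_diff tendsto_const LIMSEQ_ignore_initial_segment R_lim)
  show ?thesis
  proof (rule LIMSEQ_le_const2[OF lim], intro exI allI impI)
    fix m
    have "2 * W * (1/2)^n * (1 - (1/2)^m) \<le> 2 * W * (1/2)^n"
      using W_ge0 by (intro mult_left_le) auto
    then show "norm (R (m + n) t - R n t) \<le> 2 * W * (1/2)^n" using b[of m] by linarith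
  qed
qed

lemma r_Good: "Good r"
proof -
  have Rm: "\<And>n. R n \<in> borel_measurable borel" using R_Good unfolding Good_def by blast
  have m: "r \<in> borel_measurable borel"
    by (rule borel_measurable_LIMSEQ_metric[OF Rm R_lim])
  have b: "norm (r t) \<le> 2 * W" for t
  proof -
    have "R 0 t = 0" by (simp add: R_def)
    then show ?thesis using R_tail[of t 0] by simp
  qed
  have z: "r t = 0" if "t \<notin> {0<..T}" for t
  proof -
    have "\<And>n. R n t = 0" using R_Good that unfolding Good_def by blast
    then have "(\<lambda>n. 0) \<longlonglongrightarrow> r t" using R_lim[of t] by simp
    then show ?thesis by (simp add: LIMSEQ_const_iff)
  qed
  show ?thesis unfolding Good_def using m b z by blast
qed

lemma r_fix: "Eop r t = r t"
proof (cases "t \<in> {0<..T}")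
  case False
  then show ?thesis using r_Good by (auto simp: Eop_def Good_def)
next
  case True
  have d: "Eop r t - Eop (R n) t = Ed (\<lambda>\<tau>. r \<tau> - R n \<tau>) t" for n
    using E_diff[OF r_Good R_Good] True by simp
  have bnd: "norm (Eop r t - Eop (R n) t) \<le> (1/2) * (2 * W * (1/2)^n) * exp (gam * t)" for n
  proof -
    have "norm (Ed (\<lambda>\<tau>. r \<tau> - R n \<tau>) t) \<le> (aA * exp (- gam * \<Lambda> 1) + Mg / gam) * (2 * W * (1/2)^n) * exp (gam * t)"
    proof (rule Ed_bound)
      show "(\<lambda>\<tau>. r \<tau> - R n \<tau>) \<in> borel_measurable lebesgue"
        using Good_L1(2)[OF r_Good] Good_L1(2)[OF R_Good] by measurable
      fix \<tau>
      show "norm (r \<tau> - R n \<tau>) \<le> 2 * W * (1 / 2) ^ n * exp (gam * \<tau>)"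
      proof (cases "\<tau> \<in> {0<..T}")
        case True
        then have "1 \<le> exp (gam * \<tau>)" using gam_pos by simp
        then have "2 * W * (1/2)^n * 1 \<le> 2 * W * (1/2)^n * exp (gam * \<tau>)"
          using W_ge0 by (intro mult_left_mono) auto
        then have "2 * W * (1/2)^n \<le> 2 * W * (1/2)^n * exp (gam * \<tau>)" by simp
        then show ?thesis using R_tail[of \<tau> n] by linarith
      next
        case False
        then show ?thesis using r_Good R_Good[of n] W_ge0 by (simp add: Good_def)
      qed
    qed (use gam_pos W_ge0 in auto)
    also have "\<dots> \<le> (1/2) * (2 * W * (1/2)^n) * exp (gam * t)"
      using contr W_ge0 by (intro mult_right_mono) auto
    finally show ?thesis using d by simp
  qed
  have "(\<lambda>n. Eop r t - Eop (R n) t) \<longlonglongrightarrow> 0"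
  proof (rule Lim_null_comparison)
    show "\<forall>\<^sub>F n in sequentially. norm (Eop r t - Eop (R n) t) \<le> (1/2) * (2 * W * (1/2)^n) * exp (gam * t)"
      using bnd by simp
    show "(\<lambda>n. (1/2) * (2 * W * (1/2)^n) * exp (gam * t)) \<longlonglongrightarrow> 0"
      by (intro tendsto_mult_left_zero tendsto_mult_right_zero tendsto_mult_left_zero LIMSEQ_power_zero) auto
  qed
  then have "(\<lambda>n. Eop r t - (Eop r t - Eop (R n) t)) \<longlonglongrightarrow> Eop r t - 0"
    by (intro tendsto_diff tendsto_const)
  then have l1: "(\<lambda>n. R (Suc n) t) \<longlonglongrightarrow> Eop r t" by (simp add: R_Suc)
  have l2: "(\<lambda>n. R (Suc n) t) \<longlonglongrightarrow> r t" using R_lim by (rule LIMSEQ_Suc)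
  show ?thesis using LIMSEQ_unique[OF l1 l2] .
qed

definition xp where "xp t = p t + r t"

lemma xp_eq:
  assumes "t \<in> {0<..T}"
  shows "xp t = (\<Sum>j\<in>{1..N}. A j *v xp (t - \<Lambda> j)) + V xp t"
proof -
  have "xp t = Dop p t + Eop r t" by (simp add: xp_def p_fix r_fix)
  also have "\<dots> = (\<Sum>j\<in>{1..N}. A j *v p (t - \<Lambda> j)) + ((\<Sum>j\<in>{1..N}. A j *v r (t - \<Lambda> j)) + V xp t)"
    using assms by (simp add: Dop_def Eop_def xp_def[abs_def])
  also have "\<dots> = (\<Sum>j\<in>{1..N}. A j *v xp (t - \<Lambda> j)) + V xp t"
    by (simp add: xp_def sum.distrib matrix_vector_right_distrib add.assoc)
  finally show ?thesis .
qed

lemma xp_neg: "t \<le> 0 \<Longrightarrow> xp t = \<phi>0 t"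
  using r_Good p_fix[of t] by (simp add: xp_def Good_def Dop_def)

lemma xp_meas: "xp \<in> borel_measurable borel"
proof -
  have [measurable]: "r \<in> borel_measurable borel" using r_Good Good_def by auto
  have [measurable]: "p \<in> borel_measurable borel" by (rule p_meas)
  show ?thesis unfolding xp_def[abs_def] by measurable
qed

lemma xp_LQ: "LQ q xp"
proof -
  obtain B where "\<And>t. norm (r t) \<le> B" using r_Good unfolding Good_def by auto
  then have "LQ q r"
    using r_Good q0 unfolding Good_def
    by (intro LQ_bdd[where a=0 and b=T and B=B] bor_leb) auto
  then show ?thesis unfolding xp_def[abs_def] using p_LQ q0 by (intro LQ_add)
qed

end



context dsys
begin

lemma int_gz:
  assumes z: "Lq_on q (- \<Lambda> N) T z" and t: "t \<in> {0..T}"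
  shows "integrable (lebesgue_on {0..\<Lambda> N}) (\<lambda>s. g s *v z (t - s))"
proof -
  define Z where "Z \<tau> = (if \<tau> \<in> {- \<Lambda> N..T} then z \<tau> else 0)" for \<tau>
  have LZ: "LQ q Z" using z Lq_on_LQ unfolding Z_def[abs_def] by blast
  have Zm: "Z \<in> borel_measurable lebesgue" using LZ unfolding LQ_def by blast
  have Zi: "integrable lebesgue Z"
    using LZ q1 by (rule LQ_L1[where a="- \<Lambda> N" and b=T]) (auto simp: Z_def)
  have i1: "integrable (lebesgue_on {0..\<Lambda> N}) (\<lambda>s. gt s *v Z (t - s))"
    by (rule V_int[OF Zm Zi])
  have i2: "integrable (lebesgue_on {0..\<Lambda> N}) (\<lambda>s. g s *v Z (t - s))"
  proof (rule integrable_cong_AE_imp[OF i1])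
    show "(\<lambda>s. g s *v Z (t - s)) \<in> borel_measurable (lebesgue_on {0..\<Lambda> N})"
      using g_meas shift_meas[OF Zm] by (intro borel_measurable_mv)
    show "AE x in lebesgue_on {0..\<Lambda> N}. gt x *v Z (t - x) = g x *v Z (t - x)"
      using gt_ae by (rule AE_mp) (auto intro!: AE_I2)
  qed
  have "integrable (lebesgue_on {0..\<Lambda> N}) (\<lambda>s. g s *v z (t - s)) \<longleftrightarrow> integrable (lebesgue_on {0..\<Lambda> N}) (\<lambda>s. g s *v Z (t - s))"
  proof (rule Bochner_Integration.integrable_cong[OF refl])
    fix s assume "s \<in> space (lebesgue_on {0..\<Lambda> N})"
    then have "t - s \<in> {- \<Lambda> N..T}" using t by auto
    then show "g s *v z (t - s) = g s *v Z (t - s)" by (simp add: Z_def)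
  qed
  then show ?thesis using i2 by simp
qed

lemma exists_sol:
  assumes phi: "Lq_on q (- \<Lambda> N) 0 \<phi>"
  shows "\<exists>y. is_solution N \<Lambda> A g B q T \<phi> (\<lambda>_. 0) y"
proof -
  define \<phi>e where "\<phi>e t = (if t \<in> {- \<Lambda> N..0} then \<phi> t else 0)" for t
  have LQe: "LQ q \<phi>e" using phi Lq_on_LQ unfolding \<phi>e_def[abs_def] by blast
  have me: "\<phi>e \<in> borel_measurable lebesgue" using LQe LQ_def by blast
  obtain \<phi>' where \<phi>'m: "\<phi>' \<in> borel_measurable borel" and ae: "AE t in lebesgue. \<phi>e t = \<phi>' t"
    using borel_version[OF me] by blast
  define \<phi>0 where "\<phi>0 t = (if t \<in> {- \<Lambda> N..0} then \<phi>' t else 0)" for t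
  have \<phi>0m: "\<phi>0 \<in> borel_measurable borel"
    unfolding \<phi>0_def[abs_def] using \<phi>'m by measurable
  have ae0: "AE t in lebesgue. \<phi>e t = \<phi>0 t"
    using ae by (rule AE_mp) (auto intro!: AE_I2 simp: \<phi>e_def \<phi>0_def)
  have LQ0: "LQ q \<phi>0"
    unfolding LQ_def
  proof
    show m0: "\<phi>0 \<in> borel_measurable lebesgue" using \<phi>0m by (rule bor_leb)
    show "integrable lebesgue (\<lambda>t. norm (\<phi>0 t) powr q)"
    proof (rule integrable_cong_AE_imp)
      show "integrable lebesgue (\<lambda>t. norm (\<phi>e t) powr q)" using LQe LQ_def by blast
      show "(\<lambda>t. norm (\<phi>0 t) powr q) \<in> borel_measurable lebesgue" using m0 by measurable
      show "AE x in lebesgue. norm (\<phi>e x) powr q = norm (\<phi>0 x) powr q"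
        using ae0 by (rule AE_mp) (auto intro!: AE_I2)
    qed
  qed
  have supp: "t \<notin> {- \<Lambda> N..0} \<Longrightarrow> \<phi>0 t = 0" for t unfolding \<phi>0_def by auto
  interpret X: dsys_phi N \<Lambda> A g q T \<phi>0
    by (intro dsys_phi.intro dsys_axioms dsys_phi_axioms.intro \<phi>0m LQ0 supp)
  define y where "y t = (if t \<in> {- \<Lambda> N..0} then \<phi> t else X.xp t)" for t
  have y_alt: "y = (\<lambda>t. if t \<in> {- \<Lambda> N..0} then \<phi>e t else X.xp t)"
    by (auto simp: y_def \<phi>e_def fun_eq_iff)
  have xpl: "X.xp \<in> borel_measurable lebesgue" by (rule bor_leb[OF X.xp_meas])
  have ym: "y \<in> borel_measurable lebesgue"
    unfolding y_alt using me xpl by (intro measurable_If_set) (auto simp: Icc_leb)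
  obtain N0 where N0: "{x \<in> space lborel. \<not> (\<phi>e x = \<phi>' x)} \<subseteq> N0" "emeasure lborel N0 = 0" "N0 \<in> sets lborel"
    using ae[unfolded AE_completion_iff] by (rule AE_E)
  have yx: "y \<tau> = X.xp \<tau>" if "\<tau> \<notin> N0" for \<tau>
  proof (cases "\<tau> \<in> {- \<Lambda> N..0}")
    case True
    have "\<phi>e \<tau> = \<phi>' \<tau>" using N0(1) that by auto
    then show ?thesis using True X.xp_neg[of \<tau>] by (simp add: y_def \<phi>e_def \<phi>0_def)
  next
    case False
    then show ?thesis unfolding y_def by auto
  qed
  have N0b[measurable]: "N0 \<in> sets borel" using N0(3) by simp
  have predN0: "Measurable.pred borel (\<lambda>x. x \<notin> N0)" by measurable
  have aeN0: "AE x in lborel. x \<notin> N0"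
    by (rule AE_not_in) (simp add: null_sets_def N0)
  have aeT: "AE t in lborel. t - \<Lambda> j \<notin> N0" for j
    using AE_borel_affine[OF _ predN0 aeN0, of 1 "- \<Lambda> j"] by simp
  have aeR: "AE s in lborel. t - s \<notin> N0" for t
    using AE_borel_affine[OF _ predN0 aeN0, of "-1" t] by simp
  let ?Xt = "\<lambda>t. if t \<in> {- \<Lambda> N..T} then X.xp t else 0"
  let ?Y = "\<lambda>t. if t \<in> {- \<Lambda> N..T} then y t else 0"
  have LXt: "LQ q ?Xt" by (intro LQ_if X.xp_LQ Icc_leb)
  have Ym: "?Y \<in> borel_measurable lebesgue"
    using ym by (intro measurable_If_set) (auto simp: Icc_leb)
  have LY: "LQ q ?Y"
    unfolding LQ_def
  proof (intro conjI Ym)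
    show "integrable lebesgue (\<lambda>t. norm (?Y t) powr q)"
    proof (rule integrable_cong_AE_imp)
      show "integrable lebesgue (\<lambda>t. norm (?Xt t) powr q)" using LXt unfolding LQ_def by blast
      show "(\<lambda>t. norm (?Y t) powr q) \<in> borel_measurable lebesgue" using Ym by measurable
      show "AE x in lebesgue. norm (?Xt x) powr q = norm (?Y x) powr q"
        using AE_completion[OF aeN0] by (rule AE_mp) (auto intro!: AE_I2 simp: yx)
    qed
  qed
  have sol: "is_solution N \<Lambda> A g B q T \<phi> (\<lambda>_. 0) y"
    unfolding is_solution_def
  proof (intro conjI)
    show "Lq_on q (- \<Lambda> N) T y" using LY Lq_on_LQ by blast
    show "\<forall>\<theta>\<in>{- \<Lambda> N..0}. y \<theta> = \<phi> \<theta>" by (simp add: y_def)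
    have ae1: "AE t in lborel. t \<noteq> 0 \<and> (\<forall>j\<in>{1..N}. t - \<Lambda> j \<notin> N0)"
      using AE_lborel_singleton[of 0] AE_finite_allI[of "{1..N}" "\<lambda>j t. t - \<Lambda> j \<notin> N0" lborel] aeT
      by (auto elim: AE_mp intro!: AE_I2)
    have ae2: "AE t in lebesgue_on {0..T}. t \<noteq> 0 \<and> (\<forall>j\<in>{1..N}. t - \<Lambda> j \<notin> N0)"
      using AE_completion[OF ae1] by (subst AE_restrict_space_iff) (auto simp: Icc_leb elim: AE_mp)
    show "AE t in lebesgue_on {0..T}.
        y t = (\<Sum>j = 1..N. A j *v y (t - \<Lambda> j)) + (\<integral>s. g s *v y (t - s) \<partial>lebesgue_on {0..\<Lambda> N}) + B *v 0"
      using ae2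
    proof (rule AE_mp, intro AE_I2 impI)
      fix t assume tsp: "t \<in> space (lebesgue_on {0..T})"
        and h: "t \<noteq> 0 \<and> (\<forall>j\<in>{1..N}. t - \<Lambda> j \<notin> N0)"
      then have t: "t \<in> {0<..T}" by auto
      have "y t = X.xp t" using t by (simp add: y_def)
      also have "\<dots> = (\<Sum>j\<in>{1..N}. A j *v X.xp (t - \<Lambda> j)) + V X.xp t" by (rule X.xp_eq[OF t])
      also have "(\<Sum>j\<in>{1..N}. A j *v X.xp (t - \<Lambda> j)) = (\<Sum>j\<in>{1..N}. A j *v y (t - \<Lambda> j))"
        using h yx by (intro sum.cong) auto
      also have "V X.xp t = (\<integral>s. g s *v y (t - s) \<partial>lebesgue_on {0..\<Lambda> N})"
        unfolding V_def
      proof (rule integral_cong_AE)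
        show "(\<lambda>s. gt s *v X.xp (t - s)) \<in> borel_measurable (lebesgue_on {0..\<Lambda> N})"
          using gt_meas shift_meas[OF xpl] by (intro borel_measurable_mv)
        show "(\<lambda>s. g s *v y (t - s)) \<in> borel_measurable (lebesgue_on {0..\<Lambda> N})"
          using g_meas shift_meas[OF ym] by (intro borel_measurable_mv)
        have a1: "AE s in lebesgue_on {0..\<Lambda> N}. t - s \<notin> N0"
          using AE_completion[OF aeR[of t]] by (subst AE_restrict_space_iff) (auto simp: Icc_leb elim: AE_mp)
        show "AE s in lebesgue_on {0..\<Lambda> N}. gt s *v X.xp (t - s) = g s *v y (t - s)"
          using a1 gt_ae by eventually_elim (simp add: yx)
      qed
      finally show "y t = (\<Sum>j = 1..N. A j *v y (t - \<Lambda> j)) + (\<integral>s. g s *v y (t - s) \<partial>lebesgue_on {0..\<Lambda> N}) + B *v 0"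
        by simp
    qed
  qed
  then show ?thesis by blast
qed

end



context dsys
begin

lemma main_dir:
  assumes H: "approx_controllable_from_origin N \<Lambda> A g B q T"
  shows "approx_controllable N \<Lambda> A g B q T"
  unfolding approx_controllable_def
proof (intro allI impI)
  fix \<phi> \<psi> :: "real \<Rightarrow> real^'d" and \<epsilon> :: real
  assume phi: "Lq_on q (- \<Lambda> N) 0 \<phi>" and psi: "Lq_on q (- \<Lambda> N) 0 \<psi>" and eps: "0 < \<epsilon>"
  obtain y where ys: "is_solution N \<Lambda> A g B q T \<phi> (\<lambda>_. 0) y"
    using exists_sol[OF phi] by blast
  have yLq: "Lq_on q (- \<Lambda> N) T y" using ys unfolding is_solution_def by blast
  have yT: "Lq_on q (- \<Lambda> N) 0 (\<lambda>\<theta>. y (T + \<theta>))"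
    using T0 by (intro Lq_on_shift[OF yLq]) auto
  define \<psi>2 where "\<psi>2 \<theta> = \<psi> \<theta> - y (T + \<theta>)" for \<theta>
  have psi2: "Lq_on q (- \<Lambda> N) 0 \<psi>2"
  proof -
    have "LQ q (\<lambda>t. (if t \<in> {- \<Lambda> N..0} then \<psi> t else 0) - (if t \<in> {- \<Lambda> N..0} then y (T + t) else 0))"
      using psi yT q0 unfolding Lq_on_LQ by (intro LQ_diff)
    moreover have "(\<lambda>t. (if t \<in> {- \<Lambda> N..0} then \<psi> t else 0) - (if t \<in> {- \<Lambda> N..0} then y (T + t) else 0))
        = (\<lambda>t. if t \<in> {- \<Lambda> N..0} then \<psi>2 t else 0)"
      by (auto simp: \<psi>2_def fun_eq_iff)
    ultimately show ?thesis unfolding Lq_on_LQ by simp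
  qed
  obtain u z where u: "Lq_on q 0 T u" and zs: "is_solution N \<Lambda> A g B q T (\<lambda>_. 0) u z"
    and zn: "Lq_norm q (- \<Lambda> N) 0 (\<lambda>\<theta>. z (T + \<theta>) - \<psi>2 \<theta>) < \<epsilon>"
    using H psi2 eps unfolding approx_controllable_from_origin_def by blast
  have zLq: "Lq_on q (- \<Lambda> N) T z" using zs unfolding is_solution_def by blast
  define x where "x t = y t + z t" for t
  have xs: "is_solution N \<Lambda> A g B q T \<phi> u x"
    unfolding is_solution_def
  proof (intro conjI)
    have "LQ q (\<lambda>t. (if t \<in> {- \<Lambda> N..T} then y t else 0) + (if t \<in> {- \<Lambda> N..T} then z t else 0))"
      using yLq zLq q0 unfolding Lq_on_LQ by (intro LQ_add)
    moreover have "(\<lambda>t. (if t \<in> {- \<Lambda> N..T} then y t else 0) + (if t \<in> {- \<Lambda> N..T} then z t else 0))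
        = (\<lambda>t. if t \<in> {- \<Lambda> N..T} then x t else 0)"
      by (auto simp: x_def fun_eq_iff)
    ultimately show "Lq_on q (- \<Lambda> N) T x" unfolding Lq_on_LQ by simp
    show "\<forall>\<theta>\<in>{- \<Lambda> N..0}. x \<theta> = \<phi> \<theta>"
      using ys zs unfolding is_solution_def x_def by simp
    have ay: "AE t in lebesgue_on {0..T}. y t = (\<Sum>j = 1..N. A j *v y (t - \<Lambda> j)) + (\<integral>s. g s *v y (t - s) \<partial>lebesgue_on {0..\<Lambda> N}) + B *v 0"
      using ys unfolding is_solution_def by blast
    have az: "AE t in lebesgue_on {0..T}. z t = (\<Sum>j = 1..N. A j *v z (t - \<Lambda> j)) + (\<integral>s. g s *v z (t - s) \<partial>lebesgue_on {0..\<Lambda> N}) + B *v u t"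
      using zs unfolding is_solution_def by blast
    have asp: "AE t in lebesgue_on {0..T}. t \<in> {0..T}"
      by (rule AE_I2) simp
    show "AE t in lebesgue_on {0..T}. x t = (\<Sum>j = 1..N. A j *v x (t - \<Lambda> j)) + (\<integral>s. g s *v x (t - s) \<partial>lebesgue_on {0..\<Lambda> N}) + B *v u t"
      using ay az asp
    proof eventually_elim
      case (elim t)
      have iy: "integrable (lebesgue_on {0..\<Lambda> N}) (\<lambda>s. g s *v y (t - s))"
        using int_gz[OF yLq] elim(3) by blast
      have iz: "integrable (lebesgue_on {0..\<Lambda> N}) (\<lambda>s. g s *v z (t - s))"
        using int_gz[OF zLq] elim(3) by blast
      have I: "(\<integral>s. g s *v x (t - s) \<partial>lebesgue_on {0..\<Lambda> N})
          = (\<integral>s. g s *v y (t - s) \<partial>lebesgue_on {0..\<Lambda> N}) + (\<integral>s. g s *v z (t - s) \<partial>lebesgue_on {0..\<Lambda> N})"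
        unfolding x_def matrix_vector_right_distrib by (rule Bochner_Integration.integral_add[OF iy iz])
      have S: "(\<Sum>j = 1..N. A j *v x (t - \<Lambda> j)) = (\<Sum>j = 1..N. A j *v y (t - \<Lambda> j)) + (\<Sum>j = 1..N. A j *v z (t - \<Lambda> j))"
        unfolding x_def matrix_vector_right_distrib by (rule sum.distrib)
      show ?case unfolding I S using elim(1,2) by (simp add: x_def algebra_simps)
    qed
  qed
  have "(\<lambda>\<theta>. x (T + \<theta>) - \<psi> \<theta>) = (\<lambda>\<theta>. z (T + \<theta>) - \<psi>2 \<theta>)"
    by (auto simp: x_def \<psi>2_def fun_eq_iff)
  then have "Lq_norm q (- \<Lambda> N) 0 (\<lambda>\<theta>. x (T + \<theta>) - \<psi> \<theta>) < \<epsilon>" using zn by simp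
  then show "\<exists>u x. Lq_on q 0 T u \<and> is_solution N \<Lambda> A g B q T \<phi> u x \<and>
      Lq_norm q (- \<Lambda> N) 0 (\<lambda>\<theta>. x (T + \<theta>) - \<psi> \<theta>) < \<epsilon>"
    using u xs by blast
qed

end

theorem proposition4:
  fixes N :: nat and \<Lambda> :: "nat \<Rightarrow> real" and A :: "nat \<Rightarrow> real^'d^'d"
    and g :: "real \<Rightarrow> real^'d^'d" and B :: "real^'m^'d" and q T :: real
  assumes "N \<ge> 1"
    and "0 < \<Lambda> 1"
    and "\<And>i j. 1 \<le> i \<Longrightarrow> i < j \<Longrightarrow> j \<le> N \<Longrightarrow> \<Lambda> i < \<Lambda> j"
    and "Linf_on 0 (\<Lambda> N) g"
    and "1 \<le> q"
    and "T > 0"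
  shows "approx_controllable_from_origin N \<Lambda> A g B q T \<longleftrightarrow> approx_controllable N \<Lambda> A g B q T"
proof -
  interpret dsys N \<Lambda> A g q T
    using assms by unfold_locales auto
  show ?thesis
  proof
    assume "approx_controllable_from_origin N \<Lambda> A g B q T"
    then show "approx_controllable N \<Lambda> A g B q T" by (rule main_dir)
  next
    assume H: "approx_controllable N \<Lambda> A g B q T"
    have z: "Lq_on q (- \<Lambda> N) 0 (\<lambda>_::real. 0 :: real^'d)"
      unfolding Lq_on_LQ by (simp add: LQ_zero)
    show "approx_controllable_from_origin N \<Lambda> A g B q T"
      unfolding approx_controllable_from_origin_def
    proof (intro allI impI)
      fix \<psi> :: "real \<Rightarrow> real^'d" and \<epsilon> :: real
      assume "Lq_on q (- \<Lambda> N) 0 \<psi>" "0 < \<epsilon>"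
      then show "\<exists>u x. Lq_on q 0 T u \<and> is_solution N \<Lambda> A g B q T (\<lambda>_. 0) u x \<and>
          Lq_norm q (- \<Lambda> N) 0 (\<lambda>\<theta>. x (T + \<theta>) - \<psi> \<theta>) < \<epsilon>"
        using H z unfolding approx_controllable_def by blast
    qed
  qed
qed


end
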